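(* Let $m,d$ be positive integers, $k$ a field, and in $A=k[x_1,x_2,x_3,x_4]$ let $g_1=-x_1^{4m+d+2}+x_2x_4^{m}$, $g_2=x_1^{5}x_4-x_2^{3}x_3$, $g_3=x_1^{4m+d-1}x_2^{2}-x_3x_4^{m}$. Then $g_1,g_2,g_3$ is a regular sequence in $A$. *)

theory Defs
  imports "HOL-Computational_Algebra.Polynomial"
begin

text \<open>The polynomial ring k[x1,x2,x3,x4] is represented as the iterated univariate
polynomial ring ((((k[x1])[x2])[x3])[x4]), i.e. type 'k poly poly poly poly.\<close>

type_synonym 'k mpoly4 = "'k poly poly poly poly"

definition X1 :: "'k::comm_ring_1 mpoly4" where
  "X1 = [:[:[:[:0, 1:]:]:]:]"
definition X2 :: "'k::comm_ring_1 mpoly4" where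
  "X2 = [:[:[:0, 1:]:]:]"
definition X3 :: "'k::comm_ring_1 mpoly4" where
  "X3 = [:[:0, 1:]:]"
definition X4 :: "'k::comm_ring_1 mpoly4" where
  "X4 = [:0, 1:]"

definition gen_ideal :: "'a::comm_ring_1 list \<Rightarrow> 'a set" where
  "gen_ideal gs = {\<Sum>i<length gs. c i * gs ! i | c. True}"

definition regular_sequence :: "'a::comm_ring_1 list \<Rightarrow> bool" where
  "regular_sequence gs \<longleftrightarrow>
     (\<forall>j<length gs. \<forall>a. a * gs ! j \<in> gen_ideal (take j gs) \<longrightarrow> a \<in> gen_ideal (take j gs))
     \<and> 1 \<notin> gen_ideal gs"

end

theory Submission
  imports Defs "HOL-Computational_Algebra.Polynomial_Factorial"
begin


definition rhom :: "('a::comm_ring_1 \<Rightarrow> 'b::comm_ring_1) \<Rightarrow> bool" where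
  "rhom f \<longleftrightarrow> f 1 = 1 \<and> (\<forall>x y. f (x+y) = f x + f y) \<and> (\<forall>x y. f (x*y) = f x * f y)"

lemma rhom_1: "rhom f \<Longrightarrow> f 1 = 1" by (simp add: rhom_def)
lemma rhom_add: "rhom f \<Longrightarrow> f (x+y) = f x + f y" by (simp add: rhom_def)
lemma rhom_mult: "rhom f \<Longrightarrow> f (x*y) = f x * f y" by (simp add: rhom_def)
lemma rhom_0: "rhom f \<Longrightarrow> f 0 = 0"
  using rhom_add[of f 0 0] by simp
lemma rhom_uminus: "rhom f \<Longrightarrow> f (-x) = - f x"
  using rhom_add[of f x "-x"] rhom_0[of f] by (simp add: eq_neg_iff_add_eq_0 add.commute)
lemma rhom_diff: "rhom f \<Longrightarrow> f (x-y) = f x - f y"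
  using rhom_add[of f x "-y"] rhom_uminus[of f y] by simp
lemma rhom_power: "rhom f \<Longrightarrow> f (x^n) = f x ^ n"
  by (induction n) (simp_all add: rhom_1 rhom_mult)

lemmas rhom_simps = rhom_1 rhom_add rhom_mult rhom_0 rhom_uminus rhom_diff rhom_power

lemma rhom_comp: "rhom f \<Longrightarrow> rhom g \<Longrightarrow> rhom (\<lambda>x. g (f x))"
  by (simp add: rhom_def)

lemma rhom_to_fract: "rhom to_fract" by (simp add: rhom_def)

lemma rhom_const: "rhom (\<lambda>x. [:x:])" by (simp add: rhom_def)

definition ev :: "('a::comm_ring_1 \<Rightarrow> 'b::comm_ring_1) \<Rightarrow> 'b \<Rightarrow> 'a poly \<Rightarrow> 'b" where
  "ev f y p = poly (map_poly f p) y"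

lemma map_poly_add_hom: "rhom f \<Longrightarrow> map_poly f (p+q) = map_poly f p + map_poly f q"
  by (intro poly_eqI) (simp add: coeff_map_poly rhom_simps)

lemma ev_add: "rhom f \<Longrightarrow> ev f y (p+q) = ev f y p + ev f y q"
  by (simp add: ev_def map_poly_add_hom)

lemma ev_mult: assumes "rhom f" shows "ev f y (p*q) = ev f y p * ev f y q"
proof (induction p)
  case 0 then show ?case by (simp add: ev_def)
next
  case (pCons a p)
  have "ev f y (pCons a p * q) = ev f y (smult a q) + ev f y (pCons 0 (p*q))"
    by (simp add: ev_add assms)
  also have "ev f y (smult a q) = f a * ev f y q"
    using assms by (simp add: ev_def map_poly_smult rhom_simps)
  also have "ev f y (pCons 0 (p*q)) = y * ev f y (p*q)"
    using assms by (simp add: ev_def map_poly_pCons rhom_simps)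
  also have "ev f y (pCons a p) = f a + y * ev f y p"
    using assms by (simp add: ev_def map_poly_pCons rhom_simps)
  ultimately show ?case using pCons.IH by (simp add: distrib_right mult.assoc)
qed

lemma ev_const [simp]: "rhom f \<Longrightarrow> ev f y [:a:] = f a"
  by (simp add: ev_def map_poly_pCons rhom_simps)

lemma ev_X [simp]: "rhom f \<Longrightarrow> ev f y [:0,1:] = y"
  by (simp add: ev_def map_poly_pCons rhom_simps)

lemma rhom_ev: "rhom f \<Longrightarrow> rhom (ev f y)"
proof -
  assume f: "rhom f"
  have "ev f y 1 = 1" by (metis ev_const[OF f] pCons_one rhom_1[OF f])
  then show ?thesis unfolding rhom_def using ev_add[OF f] ev_mult[OF f] by blast
qed

lemma poly_induct_gen:
  fixes P :: "'a::comm_ring_1 poly \<Rightarrow> bool"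
  assumes c: "\<And>a. P [:a:]" and x: "P [:0,1:]"
    and add: "\<And>p q. P p \<Longrightarrow> P q \<Longrightarrow> P (p+q)" and mul: "\<And>p q. P p \<Longrightarrow> P q \<Longrightarrow> P (p*q)"
  shows "P p"
proof (induction p)
  case 0 then show ?case using c[of 0] by simp
next
  case (pCons a p)
  have "pCons a p = [:a:] + [:0,1:] * p" by simp
  then show ?case using add[OF c mul[OF x pCons.IH]] by simp
qed

lemma rhom_poly0: "rhom (\<lambda>p. poly p (0::'a::comm_ring_1))"
  by (simp add: rhom_def)



lemma gen_ideal_0: "gen_ideal [] = {0}"
  by (simp add: gen_ideal_def)

lemma gen_ideal_1: "x \<in> gen_ideal [g] \<longleftrightarrow> (\<exists>c. x = c * g)"
  by (auto simp add: gen_ideal_def)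

lemma gen_ideal_2: "x \<in> gen_ideal [g,h] \<longleftrightarrow> (\<exists>b c. x = b * g + c * h)"
proof
  assume "x \<in> gen_ideal [g,h]"
  then show "\<exists>b c. x = b * g + c * h"
    by (auto simp add: gen_ideal_def numeral_2_eq_2)
next
  assume "\<exists>b c. x = b * g + c * h"
  then obtain b c where x: "x = b * g + c * h" by blast
  let ?f = "\<lambda>i::nat. if i = 0 then b else c"
  have "x = (\<Sum>i<length [g,h]. ?f i * [g,h] ! i)"
    by (simp add: x numeral_2_eq_2)
  then show "x \<in> gen_ideal [g,h]" unfolding gen_ideal_def by (intro CollectI exI[of _ ?f]) simp
qed

lemma gen_ideal_3: "x \<in> gen_ideal [g,h,k] \<Longrightarrow> (\<exists>a b c. x = a * g + b * h + c * k)"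
  by (auto simp add: gen_ideal_def numeral_3_eq_3 add.assoc)

lemma X_dvd_iff: "[:0,1:] dvd (p::'a::idom poly) \<longleftrightarrow> poly p 0 = 0"
  using poly_eq_0_iff_dvd[of p 0] by simp

lemma prime_X: "prime_elem ([:0,1:] :: 'a::idom poly)"
proof (rule prime_elemI)
  show "[:0,1:] \<noteq> (0::'a poly)" by simp
  show "\<not> [:0,1:] dvd (1::'a poly)"
  proof
    assume "[:0,1:] dvd (1::'a poly)"
    from dvd_imp_degree_le[OF this] show False by simp
  qed
  fix a b :: "'a poly"
  assume "[:0,1:] dvd a * b"
  then show "[:0,1:] dvd a \<or> [:0,1:] dvd b" by (simp add: X_dvd_iff)
qed

lemma prime_pow_dvd_cancel:
  fixes p :: "'a::idom"
  assumes p: "prime_elem p" and t: "\<not> p dvd t"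
  shows "p^k dvd a*t \<Longrightarrow> p^k dvd a"
proof (induction k arbitrary: a)
  case 0 then show ?case by simp
next
  case (Suc k)
  then have "p dvd a * t" by (meson dvd_power dvd_trans zero_less_Suc)
  with p t have "p dvd a" by (simp add: prime_elem_dvd_mult_iff)
  then obtain a' where a: "a = p * a'" by blast
  from Suc.prems have "p * p^k dvd p * (a' * t)" by (simp add: a mult.assoc)
  then have "p^k dvd a' * t" using p by (simp add: prime_elem_def)
  then have "p^k dvd a'" by (rule Suc.IH)
  then show ?case by (simp add: a)
qed

lemma dvd_cancel_prime_pow:
  fixes p :: "'a::idom"
  assumes p: "prime_elem p" and h: "\<not> p dvd h" and d: "h dvd p^j * s"
  shows "h dvd s"
proof -
  obtain t where t: "p^j * s = h * t" using d by blast
  then have "p^j dvd t * h" by (metis dvd_triv_left mult.commute)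
  then have "p^j dvd t" using prime_pow_dvd_cancel[OF p h] by blast
  then obtain t' where t': "t = p^j * t'" by blast
  have p0: "p \<noteq> 0" using p by (simp add: prime_elem_def)
  from t t' have "p^j * s = p^j * (h * t')" by (simp add: algebra_simps)
  then have "s = h * t'" using p0 by simp
  then show ?thesis by simp
qed



definition v1 :: "'k::comm_ring_1 poly poly poly" where "v1 = [:[:[:0,1:]:]:]"
definition v2 :: "'k::comm_ring_1 poly poly poly" where "v2 = [:[:0,1:]:]"
definition v3 :: "'k::comm_ring_1 poly poly poly" where "v3 = [:0,1:]"

lemma X1_eq: "X1 = [:v1:]" by (simp add: X1_def v1_def)
lemma X2_eq: "X2 = [:v2:]" by (simp add: X2_def v2_def)
lemma X3_eq: "X3 = [:v3:]" by (simp add: X3_def v3_def)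
lemma X4_eq: "X4 = [:0,1:]" by (simp add: X4_def)

lemma prime_v3: "prime_elem (v3 :: 'k::idom poly poly poly)"
  unfolding v3_def by (rule prime_X)
lemma prime_v2: "prime_elem (v2 :: 'k::idom poly poly poly)"
  unfolding v2_def by (rule lift_prime_elem_poly prime_X)+
lemma prime_v1: "prime_elem (v1 :: 'k::idom poly poly poly)"
  unfolding v1_def by (rule lift_prime_elem_poly prime_X)+

lemma v_nz [simp]: "v1 \<noteq> 0" "v2 \<noteq> 0" "v3 \<noteq> 0"
  by (simp_all add: v1_def v2_def v3_def)

lemma v3_ndvd_v1: "\<not> v3 dvd (v1 :: 'k::idom poly poly poly)"
  unfolding v3_def by (simp add: X_dvd_iff v1_def)
lemma v2_ndvd_v1: "\<not> v2 dvd (v1 :: 'k::idom poly poly poly)"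
  unfolding v2_def v1_def by (simp add: X_dvd_iff const_poly_dvd_const_poly_iff)
lemma v1_ndvd_v2: "\<not> v1 dvd (v2 :: 'k::field poly poly poly)"
proof
  assume "v1 dvd (v2 :: 'k poly poly poly)"
  then have "[:[:0,1:]:] dvd ([:0,1:] :: 'k poly poly)"
    unfolding v1_def v2_def by (simp add: const_poly_dvd_const_poly_iff)
  then have "[:0,1:] dvd coeff ([:0,1:] :: 'k poly poly) 1"
    using const_poly_dvd_iff by blast
  then have "[:0,1:] dvd (1::'k poly)" by simp
  from dvd_imp_degree_le[OF this] show False by simp
qed



definition g1 :: "nat \<Rightarrow> nat \<Rightarrow> 'k::field mpoly4" where "g1 K m = - (X1^(K+3)) + X2 * X4^m"
definition g2 :: "'k::field mpoly4" where "g2 = X1^5 * X4 - X2^3 * X3"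
definition g3 :: "nat \<Rightarrow> nat \<Rightarrow> 'k::field mpoly4" where "g3 K m = X1^K * X2^2 - X3 * X4^m"

lemma poly0_X [simp]: "poly X1 0 = v1" "poly X2 0 = v2" "poly X3 0 = v3" "poly X4 0 = 0"
  by (simp_all add: X1_eq X2_eq X3_eq X4_eq)

lemma poly0_g1: "m > 0 \<Longrightarrow> poly (g1 K m :: 'k::field mpoly4) 0 = - (v1^(K+3))"
  by (simp add: g1_def)
lemma poly0_g2: "poly (g2 :: 'k::field mpoly4) 0 = - (v2^3 * v3)"
  by (simp add: g2_def)

lemma X4_nz [simp]: "(X4 :: 'k::field mpoly4) \<noteq> 0" by (simp add: X4_def)

lemma X4_split: obtains b' where "(b::'k::field mpoly4) = [:poly b 0:] + X4 * b'"
proof -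
  have "X4 dvd (b - [:poly b 0:])" unfolding X4_eq by (simp add: X_dvd_iff)
  then obtain b' where "b - [:poly b 0:] = X4 * b'" by blast
  then have "b = [:poly b 0:] + X4 * b'" by (simp add: algebra_simps)
  then show ?thesis using that by blast
qed

lemma nzd1:
  assumes m: "m > 0" and e: "X4 * a = c * g1 K m"
  shows "\<exists>c'. (a::'k::field mpoly4) = c' * g1 K m"
proof -
  have "poly (X4 * a) 0 = poly c 0 * poly (g1 K m) 0" using e by simp
  then have "poly c 0 * v1^(K+3) = 0" using m by (simp add: poly0_g1)
  then have "poly c 0 = 0" by simp
  then have "X4 dvd c" unfolding X4_eq by (simp add: X_dvd_iff)
  then obtain c' where c: "c = X4 * c'" by blast
  from e have "X4 * a = X4 * (c' * g1 K m)" by (simp add: c mult.assoc)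
  then show ?thesis by auto
qed

lemma nzd1_pow:
  assumes m: "m > 0"
  shows "X4^e * a = c * g1 K m \<Longrightarrow> \<exists>c'. (a::'k::field mpoly4) = c' * g1 K m"
proof (induction e arbitrary: a c)
  case 0 then show ?case by auto
next
  case (Suc e)
  then have "X4 * (X4^e * a) = c * g1 K m" by (simp add: mult.assoc)
  then obtain c' where "X4^e * a = c' * g1 K m" using nzd1[OF m] by blast
  then show ?case using Suc.IH by blast
qed

lemma cpoly_power: "[:a^n:] = [:a::'a::comm_ring_1:]^n"
proof -
  have m: "[:x*y:] = [:x::'a:] * [:y:]" for x y by simp
  show ?thesis by (induction n) (simp_all only: power_0 power_Suc m pCons_one)
qed
lemma cpoly_mult: "[:a*b:] = [:a::'a::comm_ring_1:] * [:b:]"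
  by simp

lemma key_identity:
  assumes m: "m = Suc m'"
  shows "[:v2^3 * v3 * u:] * g1 K m + [:- (u * v1^(K+3)):] * g2
       = X4 * ([:u:] * (X1^5 * g1 K m - X2 * X4^m' * g2) :: 'k::field mpoly4)"
proof -
  have a: "[:v2^3 * v3 * u:] = X2^3 * X3 * ([:u:] :: 'k mpoly4)"
    by (simp only: X2_eq X3_eq cpoly_mult cpoly_power)
  have b: "[:- (u * v1^(K+3)):] = - (X1^(K+3)) * ([:u:] :: 'k mpoly4)"
    by (simp add: X1_eq cpoly_power[symmetric])
  show ?thesis unfolding a b g1_def g2_def m by (simp add: algebra_simps)
qed

lemma nzd12:
  assumes m: "m > 0" and e: "X4 * a = b * g1 K m + c * g2"
  shows "\<exists>b' c'. (a::'k::field mpoly4) = b' * g1 K m + c' * g2"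
proof -
  obtain m' where m': "m = Suc m'" using m by (cases m) auto
  define b0 where "b0 = poly b 0"
  define c0 where "c0 = poly c 0"
  have "poly (X4 * a) 0 = poly b 0 * poly (g1 K m) 0 + poly c 0 * poly g2 0"
    using e by simp
  then have eq0: "b0 * v1^(K+3) = - (c0 * (v2^3 * v3))"
    using m by (simp add: poly0_g1 poly0_g2 b0_def c0_def algebra_simps eq_neg_iff_add_eq_0)
  then have "v3 dvd b0 * v1^(K+3)" by simp
  moreover have "\<not> v3 dvd (v1::'k poly poly poly)^(K+3)"
    using prime_elem_dvd_power[OF prime_v3] v3_ndvd_v1 by blast
  ultimately have "v3 dvd b0" using prime_elem_dvd_mult_iff[OF prime_v3] by blast
  then obtain b1 where b1: "b0 = v3 * b1" by blast
  from eq0 have "v3 * (b1 * v1^(K+3)) = v3 * (- (c0 * v2^3))" by (simp add: b1 algebra_simps)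
  then have eq1: "b1 * v1^(K+3) = - (c0 * v2^3)" using mult_left_cancel[OF v_nz(3)] by blast
  then have "v2^3 dvd b1 * v1^(K+3)" by simp
  moreover have "\<not> v2 dvd (v1::'k poly poly poly)^(K+3)"
    using prime_elem_dvd_power[OF prime_v2] v2_ndvd_v1 by blast
  ultimately have "v2^3 dvd b1" using prime_pow_dvd_cancel[OF prime_v2] by blast
  then obtain u where u: "b1 = v2^3 * u" by blast
  from eq1 have "v2^3 * (u * v1^(K+3)) = v2^3 * (- c0)" by (simp add: u algebra_simps)
  moreover have "(v2::'k poly poly poly)^3 \<noteq> 0" by simp
  ultimately have "u * v1^(K+3) = - c0" using mult_left_cancel by blast
  then have c0: "c0 = - (u * v1^(K+3))" by simp
  have b0': "b0 = v2^3 * v3 * u" by (simp add: b1 u algebra_simps)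
  obtain b' where bb: "b = [:b0:] + X4 * b'" using X4_split b0_def by blast
  obtain c' where cc: "c = [:c0:] + X4 * c'" using X4_split c0_def by blast
  have "X4 * a = ([:b0:] * g1 K m + [:c0:] * g2) + X4 * (b' * g1 K m + c' * g2)"
    using e bb cc by (simp add: algebra_simps)
  also have "[:b0:] * g1 K m + [:c0:] * g2 = X4 * ([:u:] * (X1^5 * g1 K m - X2 * X4^m' * g2))"
    unfolding b0' c0 by (rule key_identity[OF m'])
  finally have "X4 * a = X4 * (([:u:] * X1^5 + b') * g1 K m + (c' - [:u:] * X2 * X4^m') * g2)"
    by (simp add: algebra_simps)
  then have "a = ([:u:] * X1^5 + b') * g1 K m + (c' - [:u:] * X2 * X4^m') * g2" by simp
  then show ?thesis by blast
qed

lemma nzd12_pow: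
  assumes m: "m > 0"
  shows "X4^e * a = b * g1 K m + c * g2 \<Longrightarrow> \<exists>b' c'. (a::'k::field mpoly4) = b' * g1 K m + c' * g2"
proof (induction e arbitrary: a b c)
  case 0 then show ?case by auto
next
  case (Suc e)
  then have "X4 * (X4^e * a) = b * g1 K m + c * g2" by (simp add: mult.assoc)
  then obtain b' c' where "X4^e * a = b' * g1 K m + c' * g2" using nzd12[OF m] by blast
  then show ?case using Suc.IH by blast
qed



lemma A_induct:
  fixes P :: "'k::comm_ring_1 mpoly4 \<Rightarrow> bool"
  assumes c: "\<And>c. P [:[:[:[:c:]:]:]:]" and x: "P X1" "P X2" "P X3" "P X4"
    and add: "\<And>p q. P p \<Longrightarrow> P q \<Longrightarrow> P (p+q)" and mul: "\<And>p q. P p \<Longrightarrow> P q \<Longrightarrow> P (p*q)"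
  shows "P p"
proof -
  have l1: "P [:[:[:a:]:]:]" for a
  proof (induction a rule: poly_induct_gen)
    case (1 a) then show ?case by (rule c)
    case 2 then show ?case using x(1) by (simp add: X1_def)
  next
    case (3 p q) then show ?case using add[OF 3] by simp
  next
    case (4 p q) then show ?case using mul[OF 4] by (simp add: mult.commute)
  qed
  have l2: "P [:[:a:]:]" for a
  proof (induction a rule: poly_induct_gen)
    case (1 a) then show ?case by (rule l1)
    case 2 then show ?case using x(2) by (simp add: X2_def)
  next
    case (3 p q) then show ?case using add[OF 3] by simp
  next
    case (4 p q) then show ?case using mul[OF 4] by (simp add: mult.commute)
  qed
  have l3: "P [:a:]" for a
  proof (induction a rule: poly_induct_gen)
    case (1 a) then show ?case by (rule l2)
    case 2 then show ?case using x(3) by (simp add: X3_def)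
  next
    case (3 p q) then show ?case using add[OF 3] by simp
  next
    case (4 p q) then show ?case using mul[OF 4] by (simp add: mult.commute)
  qed
  show "P p"
  proof (induction p rule: poly_induct_gen)
    case (1 a) then show ?case by (rule l3)
    case 2 then show ?case using x(4) by (simp add: X4_def)
  next
    case (3 p q) then show ?case using add[OF 3] by simp
  next
    case (4 p q) then show ?case using mul[OF 4] by (simp add: mult.commute)
  qed
qed

lemma P_induct:
  fixes P :: "'k::comm_ring_1 poly poly poly \<Rightarrow> bool"
  assumes c: "\<And>c. P [:[:[:c:]:]:]" and x: "P v1" "P v2" "P v3"
    and add: "\<And>p q. P p \<Longrightarrow> P q \<Longrightarrow> P (p+q)" and mul: "\<And>p q. P p \<Longrightarrow> P q \<Longrightarrow> P (p*q)"
  shows "P p"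
proof -
  have l1: "P [:[:a:]:]" for a
  proof (induction a rule: poly_induct_gen)
    case (1 a) then show ?case by (rule c)
    case 2 then show ?case using x(1) by (simp add: v1_def)
  next
    case (3 p q) then show ?case using add[OF 3] by simp
  next
    case (4 p q) then show ?case using mul[OF 4] by (simp add: mult.commute)
  qed
  have l2: "P [:a:]" for a
  proof (induction a rule: poly_induct_gen)
    case (1 a) then show ?case by (rule l1)
    case 2 then show ?case using x(2) by (simp add: v2_def)
  next
    case (3 p q) then show ?case using add[OF 3] by simp
  next
    case (4 p q) then show ?case using mul[OF 4] by (simp add: mult.commute)
  qed
  show "P p"
  proof (induction p rule: poly_induct_gen)
    case (1 a) then show ?case by (rule l2)
    case 2 then show ?case using x(3) by (simp add: v3_def)
  next
    case (3 p q) then show ?case using add[OF 3] by simp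
  next
    case (4 p q) then show ?case using mul[OF 4] by (simp add: mult.commute)
  qed
qed



definition c4 :: "'k::comm_ring_1 \<Rightarrow> 'k mpoly4" where "c4 c = [:[:[:[:c:]:]:]:]"

lemma rhom_c4: "rhom c4"
  by (simp add: rhom_def c4_def pCons_one)

definition iota :: "'k::field poly poly poly \<Rightarrow> 'k mpoly4" where
  "iota = ev (ev (ev c4 X1) X4) X3"

lemma rhom_iota1: "rhom (ev c4 (X1::'k::field mpoly4))" by (intro rhom_ev rhom_c4)
lemma rhom_iota2: "rhom (ev (ev c4 X1) (X4::'k::field mpoly4))" by (intro rhom_ev rhom_c4)
lemma rhom_iota: "rhom (iota :: 'k::field poly poly poly \<Rightarrow> _)"
  unfolding iota_def by (intro rhom_ev rhom_c4)

lemma iota_gens [simp]: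
  "iota [:[:[:c:]:]:] = c4 c" "iota v1 = X1" "iota v2 = X4" "iota v3 = X3"
  by (simp_all add: iota_def v1_def v2_def v3_def rhom_iota1 rhom_iota2 rhom_c4)

lemmas iota_simps = rhom_simps[OF rhom_iota]

definition y1 :: "'k::field poly poly poly fract" where "y1 = to_fract v1"
definition y3 :: "'k::field poly poly poly fract" where "y3 = to_fract v3"
definition y4 :: "'k::field poly poly poly fract" where "y4 = to_fract v2"
definition y2 :: "nat \<Rightarrow> nat \<Rightarrow> 'k::field poly poly poly fract" where "y2 K m = y1^(K+3) / y4^m"

definition c0f :: "'k::field \<Rightarrow> 'k poly poly poly fract" where "c0f c = to_fract [:[:[:c:]:]:]"
lemma rhom_c0f: "rhom c0f" by (simp add: rhom_def c0f_def pCons_one to_fract_add[symmetric] to_fract_mult[symmetric] del: to_fract_add to_fract_mult)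

definition Phi :: "nat \<Rightarrow> nat \<Rightarrow> 'k::field mpoly4 \<Rightarrow> 'k poly poly poly fract" where
  "Phi K m = ev (ev (ev (ev c0f y1) (y2 K m)) y3) y4"

lemma rhom_Phi1: "rhom (ev c0f y1 :: 'k::field poly \<Rightarrow> _)" by (intro rhom_ev rhom_c0f)
lemma rhom_Phi2: "rhom (ev (ev c0f y1) (y2 K m) :: 'k::field poly poly \<Rightarrow> _)" by (intro rhom_ev rhom_c0f)
lemma rhom_Phi3: "rhom (ev (ev (ev c0f y1) (y2 K m)) y3 :: 'k::field poly poly poly \<Rightarrow> _)" by (intro rhom_ev rhom_c0f)
lemma rhom_Phi: "rhom (Phi K m :: 'k::field mpoly4 \<Rightarrow> _)"
  unfolding Phi_def by (intro rhom_ev rhom_c0f)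

lemma Phi_gens [simp]:
  "Phi K m (c4 c) = c0f c" "Phi K m X1 = y1" "Phi K m X2 = y2 K m" "Phi K m X3 = y3" "Phi K m X4 = y4"
  by (simp_all add: Phi_def c4_def X1_def X2_def X3_def X4_def rhom_Phi1 rhom_Phi2 rhom_Phi3 rhom_c0f)

lemma Phi_iota: "Phi K m (iota q) = to_fract q"
proof (induction q rule: P_induct)
  case (1 c) then show ?case by (simp add: c0f_def)
next
  case 2 then show ?case by (simp add: y1_def)
next
  case 3 then show ?case by (simp add: y4_def)
next
  case 4 then show ?case by (simp add: y3_def)
next
  case (5 p q) then show ?case by (simp add: iota_simps rhom_simps[OF rhom_Phi])
next
  case (6 p q) then show ?case by (simp add: iota_simps rhom_simps[OF rhom_Phi])
qed

lemma K1: "\<exists>e q s. X4^e * p = iota q + s * g1 K m"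
proof (induction p rule: A_induct)
  case (1 c)
  have "X4^0 * [:[:[:[:c:]:]:]:] = iota [:[:[:c:]:]:] + 0 * g1 K m" by (simp add: c4_def)
  then show ?case by blast
next
  case 2
  have "X4^0 * X1 = iota v1 + 0 * g1 K m" by simp
  then show ?case by blast
next
  case 3
  have "X4^m * X2 = iota (v1^(K+3)) + 1 * g1 K m" by (simp add: iota_simps g1_def mult.commute)
  then show ?case by blast
next
  case 4
  have "X4^0 * X3 = iota v3 + 0 * g1 K m" by simp
  then show ?case by blast
next
  case 5
  have "X4^0 * X4 = iota v2 + 0 * g1 K m" by simp
  then show ?case by blast
next
  case (6 p q)
  then obtain e1 q1 s1 e2 q2 s2 where a: "X4^e1 * p = iota q1 + s1 * g1 K m"
    and b: "X4^e2 * q = iota q2 + s2 * g1 K m" by blast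
  have "X4^(e1+e2) * (p + q) = X4^e2 * (X4^e1 * p) + X4^e1 * (X4^e2 * q)"
    by (simp add: algebra_simps power_add)
  also have "\<dots> = iota (v2^e2 * q1 + v2^e1 * q2) + (X4^e2 * s1 + X4^e1 * s2) * g1 K m"
    unfolding a b by (simp add: iota_simps algebra_simps)
  finally show ?case by blast
next
  case (7 p q)
  then obtain e1 q1 s1 e2 q2 s2 where a: "X4^e1 * p = iota q1 + s1 * g1 K m"
    and b: "X4^e2 * q = iota q2 + s2 * g1 K m" by blast
  have "X4^(e1+e2) * (p * q) = (X4^e1 * p) * (X4^e2 * q)"
    by (simp add: algebra_simps power_add)
  also have "\<dots> = iota (q1 * q2) + (s1 * iota q2 + iota q1 * s2 + s1 * s2 * g1 K m) * g1 K m"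
    unfolding a b by (simp add: iota_simps algebra_simps)
  finally show ?case by blast
qed



definition xQ1 :: "'k::field poly poly" where "xQ1 = [:[:0,1:]:]"
definition xQ4 :: "'k::field poly poly" where "xQ4 = [:0,1:]"

lemma v1_eq: "v1 = [:xQ1:]" by (simp add: v1_def xQ1_def)
lemma v2_eq: "v2 = [:xQ4:]" by (simp add: v2_def xQ4_def)

lemma xQ1_ndvd_xQ4_pow: "\<not> xQ1 dvd (xQ4 :: 'k::field poly poly)^n"
proof
  assume "xQ1 dvd (xQ4 :: 'k::field poly poly)^n"
  then have "[:0,1:] dvd coeff ((xQ4 :: 'k::field poly poly)^n) n"
    unfolding xQ1_def using const_poly_dvd_iff by blast
  then have "[:0,1:] dvd (1::'k poly)" by (simp add: xQ4_def coeff_linear_power)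
  from dvd_imp_degree_le[OF this] show False by simp
qed

lemma xQ_nz [simp]: "xQ1 \<noteq> 0" "xQ4 \<noteq> 0" by (simp_all add: xQ1_def xQ4_def)

definition HH :: "nat \<Rightarrow> nat \<Rightarrow> 'k::field poly poly poly" where
  "HH K m = v2^(3*m+1) - v1^(3*K+4) * v3"
definition H3 :: "nat \<Rightarrow> nat \<Rightarrow> 'k::field poly poly poly" where
  "H3 K m = v1^(3*K+6) - v3 * v2^(3*m)"

lemma HH_eq: "HH K m = [:xQ4^(3*m+1), - (xQ1^(3*K+4)):]"
  by (simp add: HH_def v1_eq v2_eq v3_def cpoly_power[symmetric])
lemma H3_eq: "H3 K m = [:xQ1^(3*K+6), - (xQ4^(3*m)):]"
  by (simp add: H3_def v1_eq v2_eq v3_def cpoly_power[symmetric])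

lemma const_dvd_coeff: "[:c::'a::idom:] dvd p \<Longrightarrow> c dvd coeff p n"
  using const_poly_dvd_iff[of c p] by blast

lemma v1_ndvd_HH: "\<not> v1 dvd (HH K m :: 'k::field poly poly poly)"
proof
  assume "v1 dvd (HH K m :: 'k poly poly poly)"
  then have "[:xQ1:] dvd (HH K m :: 'k poly poly poly)" by (simp only: v1_eq)
  then have "xQ1 dvd coeff (HH K m :: 'k poly poly poly) 0" by (rule const_dvd_coeff)
  moreover have "coeff (HH K m :: 'k poly poly poly) 0 = xQ4^(3*m+1)" unfolding HH_eq by (simp only: coeff_pCons_0)
  ultimately show False using xQ1_ndvd_xQ4_pow by metis
qed

lemma v1_ndvd_H3: "\<not> v1 dvd (H3 K m :: 'k::field poly poly poly)"
proof
  assume "v1 dvd (H3 K m :: 'k poly poly poly)"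
  then have "[:xQ1:] dvd (H3 K m :: 'k poly poly poly)" by (simp only: v1_eq)
  then have "xQ1 dvd coeff (H3 K m :: 'k poly poly poly) 1" by (rule const_dvd_coeff)
  moreover have "coeff (H3 K m :: 'k poly poly poly) 1 = - (xQ4^(3*m))" unfolding H3_eq by simp
  ultimately show False using xQ1_ndvd_xQ4_pow by (metis dvd_minus_iff)
qed

definition eps :: "nat \<Rightarrow> nat \<Rightarrow> 'k::field poly poly poly \<Rightarrow> 'k poly poly fract" where
  "eps K m = ev to_fract (to_fract (xQ4^(3*m+1)) / to_fract (xQ1^(3*K+4)))"

lemma rhom_eps: "rhom (eps K m)" unfolding eps_def by (intro rhom_ev rhom_to_fract)

lemma eps_const [simp]: "eps K m [:c:] = to_fract c"
  by (simp add: eps_def rhom_to_fract)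

lemma fld1: "(b::'a::field) \<noteq> 0 \<Longrightarrow> a + a / b * (- b) = 0" by simp

lemma eps_HH: "eps K m (HH K m :: 'k::field poly poly poly) = 0"
proof -
  define a :: "'k poly poly fract" where "a = to_fract (xQ4^(3*m+1))"
  define b :: "'k poly poly fract" where "b = to_fract (xQ1^(3*K+4))"
  have b0: "b \<noteq> 0" by (simp add: b_def)
  have "eps K m (HH K m :: 'k::field poly poly poly) = a + (a / b) * (- b)"
    unfolding HH_eq eps_def ev_def a_def b_def
    by (simp only: map_poly_pCons to_fract_0 map_poly_0 poly_pCons poly_0 to_fract_uminus mult_zero_right add_0_right)
  also have "\<dots> = 0" using b0 by (rule fld1)
  finally show ?thesis .
qed

lemma fld2: "(b::'a::field) \<noteq> 0 \<Longrightarrow> A + a / b * (- B) = 0 \<Longrightarrow> A * b = B * a"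
  by (simp add: field_simps)

lemma xQ1_pow_deg: "degree ((xQ1::'k::field poly poly)^n) = 0"
  by (simp add: xQ1_def cpoly_power[symmetric])
lemma xQ4_pow_deg: "degree ((xQ4::'k::field poly poly)^n) = n"
  by (simp add: xQ4_def degree_power_eq)

lemma eps_H3: "eps K m (H3 K m :: 'k::field poly poly poly) \<noteq> 0"
proof
  assume z: "eps K m (H3 K m :: 'k::field poly poly poly) = 0"
  define a :: "'k poly poly fract" where "a = to_fract (xQ4^(3*m+1))"
  define b :: "'k poly poly fract" where "b = to_fract (xQ1^(3*K+4))"
  define A :: "'k poly poly fract" where "A = to_fract (xQ1^(3*K+6))"
  define B :: "'k poly poly fract" where "B = to_fract (xQ4^(3*m))"
  have b0: "b \<noteq> 0" by (simp add: b_def)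
  have "eps K m (H3 K m :: 'k::field poly poly poly) = A + (a / b) * (- B)"
    unfolding H3_eq eps_def ev_def a_def b_def A_def B_def
    by (simp only: map_poly_pCons to_fract_0 map_poly_0 poly_pCons poly_0 to_fract_uminus mult_zero_right add_0_right)
  have z': "A + a / b * (- B) = 0" using z unfolding \<open>eps K m (H3 K m :: 'k::field poly poly poly) = A + (a / b) * (- B)\<close> .
  have "A * b = B * a" by (rule fld2[OF b0 z'])
  then have "to_fract (xQ1^(3*K+6) * xQ1^(3*K+4)) = to_fract ((xQ4::'k::field poly poly)^(3*m) * xQ4^(3*m+1))"
    by (simp only: A_def B_def a_def b_def to_fract_mult)
  then have e: "xQ1^(3*K+6+(3*K+4)) = (xQ4::'k::field poly poly)^(3*m+(3*m+1))"
    by (simp only: to_fract_eq_iff power_add)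
  have "degree ((xQ1::'k::field poly poly)^(3*K+6+(3*K+4))) = 0" by (rule xQ1_pow_deg)
  moreover have "degree ((xQ4::'k::field poly poly)^(3*m+(3*m+1))) = 3*m+(3*m+1)" by (rule xQ4_pow_deg)
  moreover have "degree ((xQ1::'k::field poly poly)^(3*K+6+(3*K+4))) = degree ((xQ4::'k::field poly poly)^(3*m+(3*m+1)))"
    using e by (rule arg_cong)
  ultimately show False by linarith
qed

lemma eps_v2: "eps K m v2 \<noteq> 0"
  by (simp add: v2_eq)

lemma eps_kernel:
  assumes e: "eps K m (p :: 'k::field poly poly poly) = 0"
  shows "HH K m dvd p"
proof -
  let ?H = "HH K m :: 'k::field poly poly poly"
  have Hnz: "?H \<noteq> 0" by (simp add: HH_eq)
  have dH: "degree ?H = 1" by (simp add: HH_eq)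
  have lc: "coeff ?H (degree ?H) = - (xQ1^(3*K+4))" by (simp add: HH_eq dH)
  obtain q r where qr: "pseudo_divmod p ?H = (q, r)" by (cases "pseudo_divmod p ?H") auto
  define k where "k = Suc (degree p) - degree ?H"
  have id: "smult ((- (xQ1^(3*K+4)))^k) p = ?H * q + r"
    using pseudo_divmod(1)[OF Hnz qr] by (simp only: lc k_def)
  have "r = 0 \<or> degree r < 1" using pseudo_divmod(2)[OF Hnz qr] dH by simp
  then have "degree r = 0" by auto
  then obtain r0 where r0: "r = [:r0:]" by (auto elim: degree_eq_zeroE)
  have sm: "eps K m (smult c p) = to_fract c * eps K m p" for c
    using rhom_mult[OF rhom_eps, where x="[:c:]" and y=p] by simp
  have "eps K m (?H * q + r) = eps K m (smult ((- (xQ1^(3*K+4)))^k) p)" by (simp only: id)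
  also have "\<dots> = 0" by (simp only: sm e mult_zero_right)
  finally have "eps K m (?H * q + r) = 0" .
  then have "to_fract r0 = 0"
    by (simp add: rhom_simps[OF rhom_eps] eps_HH r0)
  then have r: "r = 0" by (simp add: r0)
  define u :: "'k poly poly poly" where "u = [:(-1)^k:]"
  have m1: "((-1)::'k poly poly)^k * (-1)^k = 1"
    using power_mult_distrib[of "-1::'k poly poly" "-1" k] by simp
  have uu: "u * u = 1" by (simp only: u_def cpoly_mult[symmetric] m1 pCons_one)
  have cc: "(- (xQ1^(3*K+4)))^k = (-1)^k * (xQ1::'k poly poly)^((3*K+4)*k)"
    using power_minus[of "xQ1^(3*K+4)" k] power_mult[of "xQ1::'k poly poly" "3*K+4" k] by simp
  have sc: "smult c p = [:c:] * p" for c by simp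
  have "smult ((- (xQ1^(3*K+4)))^k) p = [:(-1)^k:] * [:xQ1^((3*K+4)*k):] * p"
    by (simp only: cc sc cpoly_mult)
  also have "[:(xQ1::'k poly poly)^((3*K+4)*k):] = v1^((3*K+4)*k)"
    by (simp only: v1_eq cpoly_power)
  finally have "smult ((- (xQ1^(3*K+4)))^k) p = v1^((3*K+4)*k) * (u * p)"
    by (simp add: u_def algebra_simps)
  then have "?H dvd v1^((3*K+4)*k) * (u * p)" using id r by (metis add.right_neutral dvd_triv_left)
  then have "?H dvd u * p" by (rule dvd_cancel_prime_pow[OF prime_v1 v1_ndvd_HH])
  then have "?H dvd u * (u * p)" by simp
  then show ?thesis by (simp only: mult.assoc[symmetric] uu mult_1_left)
qed


lemma fg2: assumes "(b::'a::field) \<noteq> 0"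
  shows "(x^5 * b - (x^(K+3)/b^m)^3 * z) * b^(3*m) = x^5*(b^(3*m+1) - x^(3*K+4)*z)"
proof -
  have p1: "(b^m)^3 = b^(3*m)" by (metis power_mult mult.commute)
  have p2: "(x^(K+3))^3 = x^5 * x^(3*K+4)"
  proof -
    have "(x^(K+3))^3 = x^((K+3)*3)" by (rule power_mult[symmetric])
    also have "(K+3)*3 = 5 + (3*K+4)" by simp
    finally show ?thesis by (simp only: power_add)
  qed
  have bn: "b^(3*m) \<noteq> 0" using assms by simp
  have "(x^(K+3)/b^m)^3 * b^(3*m) = x^5 * x^(3*K+4)"
    using bn by (simp only: power_divide p1 p2) simp
  moreover have "b^(3*m+1) = b * b^(3*m)" by simp
  ultimately show ?thesis by (simp add: algebra_simps)
qed
lemma fg3: assumes "(b::'a::field) \<noteq> 0"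
  shows "(x^K * (x^(K+3)/b^m)^2 - z*b^m) * b^(2*m) = x^(3*K+6) - z * b^(3*m)"
proof -
  have p1: "(b^m)^2 = b^(2*m)" by (metis power_mult mult.commute)
  have p2: "x^K * (x^(K+3))^2 = x^(3*K+6)"
  proof -
    have "(x^(K+3))^2 = x^((K+3)*2)" by (rule power_mult[symmetric])
    then have "x^K * (x^(K+3))^2 = x^K * x^((K+3)*2)" by (simp only:)
    also have "\<dots> = x^(K + (K+3)*2)" by (rule power_add[symmetric])
    also have "K + (K+3)*2 = 3*K+6" by simp
    finally show ?thesis .
  qed
  have bn: "b^(2*m) \<noteq> 0" using assms by simp
  have "x^K * (x^(K+3)/b^m)^2 * b^(2*m) = x^(3*K+6)"
    using bn p2 by (simp only: power_divide p1 mult.assoc) (simp add: mult.assoc[symmetric])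
  moreover have "b^m * b^(2*m) = b^(3*m)" by (simp add: power_add[symmetric])
  ultimately show ?thesis by (simp add: algebra_simps)
qed

lemma y4_nz: "y4 \<noteq> 0" by (simp add: y4_def)

lemma Phi_g2: "Phi K m (g2 :: 'k::field mpoly4) * y4^(3*m) = to_fract (v1^5 * HH K m)"
proof -
  have eq: "Phi K m (g2 :: 'k::field mpoly4) = y1^5 * y4 - (y1^(K+3)/y4^m)^3 * y3"
    by (simp only: g2_def rhom_simps[OF rhom_Phi] Phi_gens y2_def)
  have "Phi K m (g2 :: 'k::field mpoly4) * y4^(3*m) = y1^5*(y4^(3*m+1) - y1^(3*K+4)*y3)"
    unfolding eq by (rule fg2[OF y4_nz])
  also have "\<dots> = to_fract (v1^5 * HH K m)"
    by (simp only: HH_def y1_def y3_def y4_def to_fract_mult to_fract_diff rhom_power[OF rhom_to_fract])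
  finally show ?thesis .
qed

lemma Phi_g3: "Phi K m (g3 K m :: 'k::field mpoly4) * y4^(2*m) = to_fract (H3 K m)"
proof -
  have eq: "Phi K m (g3 K m :: 'k::field mpoly4) = y1^K * (y1^(K+3)/y4^m)^2 - y3*y4^m"
    by (simp only: g3_def rhom_simps[OF rhom_Phi] Phi_gens y2_def)
  have "Phi K m (g3 K m :: 'k::field mpoly4) * y4^(2*m) = y1^(3*K+6) - y3 * y4^(3*m)"
    unfolding eq by (rule fg3[OF y4_nz])
  also have "\<dots> = to_fract (H3 K m)"
    by (simp only: H3_def y1_def y3_def y4_def to_fract_mult to_fract_diff rhom_power[OF rhom_to_fract])
  finally show ?thesis .
qed

lemma HH_nz: "HH K m \<noteq> 0" by (simp add: HH_eq)

lemma main_dvd: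
  assumes e: "qa * (H3 K m * v2^j) = r * (v1^5 * HH K m)"
  shows "v1^5 * HH K m dvd (qa :: 'k::field poly poly poly)"
proof -
  define T where "T = (H3 K m * v2^j :: 'k poly poly poly)"
  have nT: "\<not> v1 dvd T"
  proof
    assume "v1 dvd T"
    then have "v1 dvd (H3 K m :: 'k poly poly poly) * v2^j" by (simp only: T_def)
    then have "v1 dvd (H3 K m :: 'k poly poly poly) \<or> (v1 :: 'k poly poly poly) dvd v2^j" by (simp only: prime_elem_dvd_mult_iff[OF prime_v1])
    then show False
    proof
      assume "v1 dvd (H3 K m :: 'k poly poly poly)" then show False using v1_ndvd_H3 by auto
    next
      assume "(v1 :: 'k poly poly poly) dvd v2^j" then have "(v1 :: 'k poly poly poly) dvd v2" by (rule prime_elem_dvd_power[OF prime_v1])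
      then show False using v1_ndvd_v2 by auto
    qed
  qed
  have qT: "qa * T = r * (v1^5 * HH K m)" using e by (simp only: T_def)
  have "v1^5 dvd r * (v1^5 * HH K m)" by (rule dvd_mult, rule dvd_mult2, rule dvd_refl)
  then have "v1^5 dvd qa * T" by (simp only: qT)
  then have "v1^5 dvd qa" by (rule prime_pow_dvd_cancel[OF prime_v1 nT])
  then obtain s where s: "qa = v1^5 * s" by blast
  have "v1^5 * (s * T) = qa * T" by (simp only: s mult.assoc)
  also have "\<dots> = v1^5 * (r * HH K m)" by (simp only: qT mult.left_commute)
  finally have eq5: "v1^5 * (s * T) = v1^5 * (r * HH K m)" .
  have v15: "(v1::'k poly poly poly)^5 \<noteq> 0" by simp
  have sT: "s * T = r * HH K m" by (rule mult_left_cancel[OF v15, THEN iffD1, OF eq5])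
  have "eps K m (s * T) = 0" unfolding sT by (simp add: rhom_simps[OF rhom_eps] eps_HH)
  moreover have "eps K m T \<noteq> 0"
    unfolding T_def by (simp add: rhom_simps[OF rhom_eps] eps_H3 eps_v2)
  ultimately have "eps K m s = 0" by (simp add: rhom_simps[OF rhom_eps])
  then have "HH K m dvd s" by (rule eps_kernel)
  then show ?thesis unfolding s by simp
qed


lemma fld_g1: "(b::'a::field) \<noteq> 0 \<Longrightarrow> - (x^(K+3)) + x^(K+3)/b^m * b^m = 0"
  by simp

lemma Phi_g1: "Phi K m (g1 K m :: 'k::field mpoly4) = 0"
proof -
  have "Phi K m (g1 K m :: 'k::field mpoly4) = - (y1^(K+3)) + y1^(K+3)/y4^m * y4^m"
    by (simp only: g1_def rhom_simps[OF rhom_Phi] Phi_gens y2_def)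
  also have "\<dots> = 0" by (rule fld_g1[OF y4_nz])
  finally show ?thesis .
qed

lemma Phi_g2_nz: "Phi K m (g2 :: 'k::field mpoly4) \<noteq> 0"
proof
  assume z: "Phi K m (g2 :: 'k::field mpoly4) = 0"
  have "to_fract (v1^5 * HH K m :: 'k poly poly poly) = Phi K m (g2 :: 'k::field mpoly4) * y4^(3*m)"
    by (rule Phi_g2[symmetric])
  also have "\<dots> = 0" by (simp only: z mult_zero_left)
  finally have "to_fract (v1^5 * HH K m :: 'k poly poly poly) = 0" .
  moreover have "(HH K m :: 'k poly poly poly) \<noteq> 0" by (rule HH_nz)
  ultimately show False by simp
qed

lemma ring3: "(A::'a::comm_ring_1) * G3 = C * G2 \<Longrightarrow> ya = w^e * A \<Longrightarrow> yc = w^f * C \<Longrightarrow>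
   h3 = G3 * w^(2*m) \<Longrightarrow> h2 = G2 * w^(3*m) \<Longrightarrow>
   ya * (h3 * w^(f+3*m)) = (yc * w^(e+2*m)) * h2"
proof -
  assume a: "A * G3 = C * G2" "ya = w^e * A" "yc = w^f * C" "h3 = G3 * w^(2*m)" "h2 = G2 * w^(3*m)"
  have "ya * (h3 * w^(f+3*m)) = (A * G3) * (w^e * w^(2*m) * w^f * w^(3*m))"
    using a(2,4) by (simp add: power_add ac_simps)
  also have "\<dots> = (C * G2) * (w^e * w^(2*m) * w^f * w^(3*m))" by (simp only: a(1))
  also have "\<dots> = (yc * w^(e+2*m)) * h2"
    using a(3,5) by (simp add: power_add ac_simps)
  finally show ?thesis .
qed

lemma ring_ident:
  "(x1::'a::comm_ring_1)^5*(x4^(3*m+1) - x1^(3*K+4)*x3) =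
    x4^(3*m)*(x1^5*x4 - x2^3*x3) + (x3*((x2*x4^m)^2 + (x2*x4^m)*x1^(K+3) + (x1^(K+3))^2))*(-(x1^(K+3)) + x2*x4^m)"
proof -
  define U where "U = x2*x4^m"
  define W where "W = x1^(K+3)"
  have c: "x3*(U^2 + U*W + W^2)*(-W + U) = x3*(U^3 - W^3)" by (simp add: algebra_simps power2_eq_square power3_eq_cube)
  have u3: "U^3 = x2^3 * x4^(3*m)" unfolding U_def by (simp add: power_mult_distrib power_mult[symmetric] mult.commute)
  have w3: "W^3 = x1^5 * x1^(3*K+4)"
  proof -
    have "W^3 = x1^((K+3)*3)" unfolding W_def by (rule power_mult[symmetric])
    also have "(K+3)*3 = 5 + (3*K+4)" by simp
    finally show ?thesis by (simp only: power_add)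
  qed
  have x4: "x4^(3*m+1) = x4^(3*m) * x4" by simp
  show ?thesis
    unfolding U_def[symmetric] W_def[symmetric] c u3 w3 x4 by (simp add: algebra_simps)
qed

lemma iota_HH: "iota (v1^5 * HH K m) = X4^(3*m) * g2 + (X3*((X2*X4^m)^2 + (X2*X4^m)*X1^(K+3) + (X1^(K+3))^2)) * g1 K m"
proof -
  have "iota (v1^5 * HH K m) = X1^5*(X4^(3*m+1) - X1^(3*K+4)*X3)"
    by (simp only: HH_def iota_simps iota_gens)
  also have "\<dots> = X4^(3*m) * g2 + (X3*((X2*X4^m)^2 + (X2*X4^m)*X1^(K+3) + (X1^(K+3))^2)) * g1 K m"
    unfolding g1_def g2_def by (rule ring_ident)
  finally show ?thesis .
qed


lemma step2:
  assumes m: "m > 0" and e: "a * g2 = c * g1 K m"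
  shows "\<exists>c'. (a::'k::field mpoly4) = c' * g1 K m"
proof -
  obtain ea q s where k: "X4^ea * a = iota q + s * g1 K m" using K1[where p=a and K=K and m=m] by blast
  have "Phi K m a * Phi K m g2 = Phi K m c * Phi K m (g1 K m)"
    using arg_cong[OF e, of "Phi K m"] by (simp only: rhom_mult[OF rhom_Phi])
  then have "Phi K m a * Phi K m g2 = 0" by (simp only: Phi_g1 mult_zero_right)
  moreover have "Phi K m (g2::'k mpoly4) \<noteq> 0" by (rule Phi_g2_nz)
  ultimately have pa: "Phi K m a = 0" by simp
  have "Phi K m (X4^ea * a) = Phi K m (iota q + s * g1 K m)" using k by (rule arg_cong)
  then have "y4^ea * Phi K m a = to_fract q + Phi K m s * Phi K m (g1 K m)"
    by (simp only: rhom_mult[OF rhom_Phi] rhom_add[OF rhom_Phi] rhom_power[OF rhom_Phi] Phi_gens Phi_iota)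
  then have "to_fract q = 0" by (simp only: pa Phi_g1 mult_zero_right add_0_right)
  then have "q = 0" by simp
  then have "X4^ea * a = s * g1 K m" using k by (simp add: rhom_0[OF rhom_iota])
  then show ?thesis by (rule nzd1_pow[OF m])
qed

lemma step3:
  assumes m: "m > 0" and e: "a * g3 K m = b * g1 K m + c * g2"
  shows "\<exists>b' c'. (a::'k::field mpoly4) = b' * g1 K m + c' * g2"
proof -
  obtain ea qa sa where ka: "X4^ea * a = iota qa + sa * g1 K m" using K1[where p=a and K=K and m=m] by blast
  obtain ec qc sc where kc: "X4^ec * c = iota qc + sc * g1 K m" using K1[where p=c and K=K and m=m] by blast
  have "Phi K m a * Phi K m (g3 K m) = Phi K m b * Phi K m (g1 K m) + Phi K m c * Phi K m g2"
    using arg_cong[OF e, of "Phi K m"] by (simp only: rhom_mult[OF rhom_Phi] rhom_add[OF rhom_Phi])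
  then have pe: "Phi K m a * Phi K m (g3 K m) = Phi K m c * Phi K m g2"
    by (simp only: Phi_g1 mult_zero_right add_0_left)
  have ya: "to_fract qa = y4^ea * Phi K m a"
  proof -
    have "Phi K m (X4^ea * a) = Phi K m (iota qa + sa * g1 K m)" using ka by (rule arg_cong)
    then show ?thesis
      by (simp only: rhom_mult[OF rhom_Phi] rhom_add[OF rhom_Phi] rhom_power[OF rhom_Phi] Phi_gens Phi_iota
          Phi_g1 mult_zero_right add_0_right)
  qed
  have yc: "to_fract qc = y4^ec * Phi K m c"
  proof -
    have "Phi K m (X4^ec * c) = Phi K m (iota qc + sc * g1 K m)" using kc by (rule arg_cong)
    then show ?thesis
      by (simp only: rhom_mult[OF rhom_Phi] rhom_add[OF rhom_Phi] rhom_power[OF rhom_Phi] Phi_gens Phi_iota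
          Phi_g1 mult_zero_right add_0_right)
  qed
  have "to_fract qa * (to_fract (H3 K m) * y4^(ec+3*m)) = (to_fract qc * y4^(ea+2*m)) * to_fract (v1^5 * HH K m)"
    by (rule ring3[OF pe ya yc Phi_g3[symmetric] Phi_g2[symmetric]])
  then have "to_fract (qa * (H3 K m * v2^(ec+3*m))) = to_fract ((qc * v2^(ea+2*m)) * (v1^5 * HH K m))"
    by (simp only: to_fract_mult rhom_power[OF rhom_to_fract] y4_def)
  then have "qa * (H3 K m * v2^(ec+3*m)) = (qc * v2^(ea+2*m)) * (v1^5 * HH K m)" by (simp only: to_fract_eq_iff)
  then have "v1^5 * HH K m dvd qa" by (rule main_dvd)
  then obtain v where v: "qa = v1^5 * HH K m * v" by blast
  define Z where "Z = (X3*((X2*X4^m)^2 + (X2*X4^m)*X1^(K+3) + (X1^(K+3))^2) :: 'k mpoly4)"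
  have iq: "iota qa = iota (v1^5 * HH K m) * iota v" unfolding v by (rule rhom_mult[OF rhom_iota])
  have "X4^ea * a = (X4^(3*m) * g2 + Z * g1 K m) * iota v + sa * g1 K m"
    using ka by (simp only: iq iota_HH Z_def)
  also have "\<dots> = (Z * iota v + sa) * g1 K m + (X4^(3*m) * iota v) * g2"
    by (simp add: algebra_simps)
  finally show ?thesis by (rule nzd12_pow[OF m])
qed

lemma g1_nz: assumes m: "m > 0" shows "(g1 K m :: 'k::field mpoly4) \<noteq> 0"
proof
  assume "(g1 K m :: 'k::field mpoly4) = 0"
  then have "poly (g1 K m :: 'k::field mpoly4) 0 = 0" by simp
  moreover have "poly (g1 K m :: 'k::field mpoly4) 0 = - (v1^(K+3))" by (rule poly0_g1[OF m])
  ultimately show False by simp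
qed

lemma main_reg:
  assumes m: "m > 0"
  shows "regular_sequence [g1 K m, g2, g3 K m :: 'k::field mpoly4]"
  unfolding regular_sequence_def
proof (intro conjI allI impI)
  fix j a assume j: "j < length [g1 K m, g2, g3 K m :: 'k::field mpoly4]"
    and h: "a * [g1 K m, g2, g3 K m] ! j \<in> gen_ideal (take j [g1 K m, g2, g3 K m :: 'k::field mpoly4])"
  from j have "j = 0 \<or> j = 1 \<or> j = 2" by auto
  then show "a \<in> gen_ideal (take j [g1 K m, g2, g3 K m :: 'k::field mpoly4])"
  proof (elim disjE)
    assume j0: "j = 0"
    from h have "a * g1 K m = 0" by (simp add: j0 gen_ideal_0)
    moreover have "(g1 K m :: 'k mpoly4) \<noteq> 0" by (rule g1_nz[OF m])
    ultimately have "a = 0" by simp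
    then show ?thesis by (simp add: j0 gen_ideal_0)
  next
    assume j1: "j = 1"
    from h obtain c where "a * g2 = c * g1 K m" by (auto simp add: j1 gen_ideal_1)
    then obtain c' where "a = c' * g1 K m" using step2[OF m] by blast
    then show ?thesis by (auto simp add: j1 gen_ideal_1)
  next
    assume j2: "j = 2"
    from h obtain b c where "a * g3 K m = b * g1 K m + c * g2"
      by (auto simp add: j2 gen_ideal_2 numeral_2_eq_2)
    then obtain b' c' where "a = b' * g1 K m + c' * g2" using step3[OF m] by blast
    then show ?thesis by (auto simp add: j2 gen_ideal_2 numeral_2_eq_2)
  qed
next
  show "1 \<notin> gen_ideal [g1 K m, g2, g3 K m :: 'k::field mpoly4]"
  proof
    assume "1 \<in> gen_ideal [g1 K m, g2, g3 K m :: 'k::field mpoly4]"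
    then obtain a b c where e: "1 = a * g1 K m + b * g2 + c * (g3 K m :: 'k::field mpoly4)"
      using gen_ideal_3 by blast
    have "poly (poly (poly (poly (1 :: 'k mpoly4) 0) 0) 0) 0 =
          poly (poly (poly (poly (a * g1 K m + b * g2 + c * (g3 K m :: 'k::field mpoly4)) 0) 0) 0) 0"
      using e by simp
    then show False using m by (simp add: g1_def g2_def g3_def X1_def X2_def X3_def X4_def power_0_left)
  qed
qed


theorem lemma5p3:
  fixes m d :: nat
  assumes "m > 0" and "d > 0"
  shows "regular_sequence
     [ - ((X1::'k::field mpoly4) ^ (4*m+d+2)) + X2 * X4 ^ m,
       X1 ^ 5 * X4 - X2 ^ 3 * X3,
       X1 ^ (4*m+d-1) * X2 ^ 2 - X3 * X4 ^ m
     ]"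
proof -
  define K where "K = 4*m+d-1"
  have e: "4*m+d+2 = K+3" using assms by (simp add: K_def)
  have "regular_sequence [g1 K m, g2, g3 K m :: 'k::field mpoly4]" by (rule main_reg[OF assms(1)])
  then show ?thesis by (simp only: g1_def g2_def g3_def e K_def)
qed

end
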